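(* Let $r\ge2$ be an integer and $c\ge\frac1{r-1}$ a real number. Then $|\mathcal Q^c_n|=n^{(r-1)(c+o(1))n}$ and $|\mathcal S^c_n|=n^{(r-1)(c+o(1))n}$.
   Context: All hypergraphs are finite $r$-uniform hypergraphs $G=(V,E)$ with $E\subseteq\binom Vr$; $v(G)=|V|$, $e(G)=|E|$; $H\subseteq G$ means $H$ is an induced subhypergraph $G[U]=(U,E\cap\binom Ur)$ for some $U\subseteq V$. $\mathcal Q^c$ is the class of $G$ such that $e(H)\le c\,v(H)$ for every $H\subseteq G$; $\mathcal S^c$ is the class of $G$ with $e(G)\le c\,v(G)$. For a class $\mathcal P$, $\mathcal P_n$ is the set of its members with vertex set $[n]$. *)

theory Defs
  imports Complex_Main
begin

definition hypergraphs_on :: "nat \<Rightarrow> nat \<Rightarrow> nat set set set" where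
  "hypergraphs_on r n = {E. E \<subseteq> {S. S \<subseteq> {1..n} \<and> card S = r}}"

definition induced_edges :: "nat set set \<Rightarrow> nat set \<Rightarrow> nat set set" where
  "induced_edges E U = {e \<in> E. e \<subseteq> U}"

definition Q_class :: "nat \<Rightarrow> real \<Rightarrow> nat \<Rightarrow> nat set set set" where
  "Q_class r c n = {E \<in> hypergraphs_on r n.
     \<forall>U. U \<subseteq> {1..n} \<longrightarrow> real (card (induced_edges E U)) \<le> c * real (card U)}"

definition S_class :: "nat \<Rightarrow> real \<Rightarrow> nat \<Rightarrow> nat set set set" where
  "S_class r c n = {E \<in> hypergraphs_on r n. real (card E) \<le> c * real n}"

end

theory Submission
  imports Defs "HOL-Combinatorics.Permutations" "HOL-Library.FuncSet"
begin


lemma exp_partial: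
  fixes x :: real assumes "0 \<le> x" "finite I"
  shows "(\<Sum>k\<in>I. x^k / fact k) \<le> exp x"
proof -
  have "(\<Sum>k\<in>I. inverse (fact k) * x^k) \<le> (\<Sum>n. inverse (fact n) * x^n)"
    using assms by (intro sum_le_suminf[OF summable_exp]) auto
  then show ?thesis by (simp add: exp_def divide_inverse mult.commute)
qed

lemma ln_fact_lower:
  fixes s :: nat assumes "s \<ge> 1"
  shows "ln (fact s) \<ge> real s * ln (real s) - real s"
proof -
  have "(\<Sum>k\<in>{s}. real s^k / fact k) \<le> exp (real s)"
    by (rule exp_partial) auto
  hence h: "real s ^ s / fact s \<le> exp (real s)" by simp
  have pos: "(0::real) < fact s" by simp
  have "ln (real s ^ s / fact s) \<le> ln (exp (real s))"
    using h assms by (subst ln_le_cancel_iff) auto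
  hence "ln (real s ^ s / fact s) \<le> real s" by simp
  moreover have "ln (real s ^ s / fact s) = real s * ln (real s) - ln (fact s)"
    using assms pos by (simp add: ln_div ln_realpow)
  ultimately show ?thesis by simp
qed

lemma card_S_upper:
  fixes r n :: nat and c :: real
  assumes "n \<ge> 1" "r \<ge> 1"
  shows "real (card (S_class r c n)) \<le> real n ^ ((r-1) * nat \<lfloor>c * real n\<rfloor>) * exp (real n)"
proof -
  define A where "A = {S. S \<subseteq> {1..n} \<and> card S = r}"
  define m where "m = nat \<lfloor>c * real n\<rfloor>"
  have finA: "finite A" unfolding A_def by (rule finite_subset[of _ "Pow {1..n}"]) auto
  have cardA: "card A = n choose r" unfolding A_def using n_subsets[of "{1..n}" r] by simp
  have sub: "S_class r c n \<subseteq> (\<Union>k\<in>{..m}. {E. E \<subseteq> A \<and> card E = k})"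
  proof
    fix E assume E: "E \<in> S_class r c n"
    hence EA: "E \<subseteq> A" and cE: "real (card E) \<le> c * real n"
      unfolding S_class_def hypergraphs_on_def A_def by auto
    have "card E \<le> m" unfolding m_def using cE by linarith
    thus "E \<in> (\<Union>k\<in>{..m}. {E. E \<subseteq> A \<and> card E = k})" using EA by auto
  qed
  have "card (S_class r c n) \<le> card (\<Union>k\<in>{..m}. {E. E \<subseteq> A \<and> card E = k})"
    by (rule card_mono[OF _ sub]) (use finA in auto)
  also have "\<dots> \<le> (\<Sum>k\<in>{..m}. card {E. E \<subseteq> A \<and> card E = k})"
    by (rule card_UN_le) auto
  also have "\<dots> = (\<Sum>k\<in>{..m}. card A choose k)"
    using n_subsets[OF finA] by simp
  finally have c1: "real (card (S_class r c n)) \<le> (\<Sum>k\<in>{..m}. real (card A choose k))"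
    by (metis of_nat_le_iff of_nat_sum)
  have "real (card A choose k) \<le> real n ^ ((r-1) * m) * (real n ^ k / fact k)" if "k \<le> m" for k
  proof -
    have "real (card A choose k) * fact k \<le> real (card A) ^ k"
      using binomial_fact_pow[of "card A" k] by (metis of_nat_fact of_nat_le_iff of_nat_mult of_nat_power)
    hence b1: "real (card A choose k) \<le> real (card A) ^ k / fact k"
      by (simp add: field_simps)
    have "card A \<le> n ^ r"
    proof (cases "r \<le> n")
      case True thus ?thesis by (simp add: cardA binomial_le_pow)
    next
      case False thus ?thesis by (simp add: cardA binomial_eq_0)
    qed
    hence "real (card A) ^ k \<le> (real n ^ r) ^ k"
      by (intro power_mono) (auto simp flip: of_nat_power)
    also have "\<dots> = (real n ^ (r-1)) ^ k * real n ^ k"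
    proof -
      have "real n ^ r = real n ^ (r-1) * real n" using assms
        by (metis Suc_diff_1 less_le_trans power_Suc2 zero_less_one)
      thus ?thesis by (simp add: power_mult_distrib)
    qed
    also have "\<dots> \<le> real n ^ ((r-1) * m) * real n ^ k"
    proof -
      have "(real n ^ (r-1)) ^ k = real n ^ ((r-1)*k)" by (simp add: power_mult)
      also have "\<dots> \<le> real n ^ ((r-1)*m)" using assms that by (intro power_increasing) auto
      finally show ?thesis by (intro mult_right_mono) auto
    qed
    finally have "real (card A) ^ k / fact k \<le> real n ^ ((r-1) * m) * real n ^ k / fact k"
      by (intro divide_right_mono) auto
    thus ?thesis using b1 by simp
  qed
  hence "(\<Sum>k\<in>{..m}. real (card A choose k)) \<le> (\<Sum>k\<in>{..m}. real n ^ ((r-1) * m) * (real n ^ k / fact k))"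
    by (intro sum_mono) auto
  also have "\<dots> = real n ^ ((r-1) * m) * (\<Sum>k\<in>{..m}. real n ^ k / fact k)"
    by (simp add: sum_distrib_left)
  also have "\<dots> \<le> real n ^ ((r-1) * m) * exp (real n)"
    by (intro mult_left_mono exp_partial) auto
  finally show ?thesis using c1 unfolding m_def by linarith
qed



definition clampv :: "nat \<Rightarrow> real \<Rightarrow> real" where
  "clampv v t = min (real v + 1) (max (real v) t)"

definition ovl :: "real \<Rightarrow> nat \<Rightarrow> nat \<Rightarrow> real" where
  "ovl c j v = clampv v (real (Suc j) / c) - clampv v (real j / c)"

definition aj :: "real \<Rightarrow> nat \<Rightarrow> nat" where
  "aj c j = nat \<lfloor>real j / c\<rfloor>"

definition exv :: "real \<Rightarrow> nat \<Rightarrow> nat \<Rightarrow> nat \<Rightarrow> nat \<Rightarrow> nat" where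
  "exv c r M K j = (if ovl c j (aj c j + r - 1) > 0 then aj c j + r - 1 else M + r + j mod K)"

definition fe :: "real \<Rightarrow> nat \<Rightarrow> nat \<Rightarrow> nat \<Rightarrow> nat \<Rightarrow> nat set" where
  "fe c r M K j = {aj c j ..< aj c j + r - 1} \<union> {exv c r M K j}"

lemma clamp_sum: "(\<Sum>v<N. clampv v t - real v) = min (real N) (max 0 t)"
  by (induction N) (auto simp: clampv_def min_def max_def)

lemma clamp_mono: "x \<le> y \<Longrightarrow> clampv v x \<le> clampv v y"
  by (auto simp: clampv_def min_def max_def)

lemma ovl_nonneg: "c > 0 \<Longrightarrow> ovl c j v \<ge> 0"
  unfolding ovl_def by (auto intro!: clamp_mono divide_right_mono)

lemma ovl_pos_D:
  assumes "c > 0" "ovl c j v > 0"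
  shows "real v < real (Suc j) / c" "real j / c < real v + 1"
  using assms unfolding ovl_def clampv_def by (auto simp: min_def max_def split: if_splits)

lemma aj_le: "c > 0 \<Longrightarrow> real (aj c j) \<le> real j / c"
  unfolding aj_def by (simp add: of_nat_nat)

lemma aj_gt: "c > 0 \<Longrightarrow> real j / c < real (aj c j) + 1"
  unfolding aj_def by (simp add: of_nat_nat)

lemma ovl_pos_range:
  assumes c: "c > 0" "1 / c \<le> real r - 1" and p: "ovl c j v > 0"
  shows "aj c j \<le> v" "v < aj c j + r"
proof -
  have a1: "real j / c < real v + 1" and a2: "real v < real (Suc j) / c"
    using ovl_pos_D[OF c(1) p] by auto
  have "real (aj c j) \<le> real j / c" by (rule aj_le[OF c(1)])
  hence "real (aj c j) < real v + 1" using a1 by linarith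
  thus "aj c j \<le> v" by linarith
  have "real (Suc j) / c = real j / c + 1 / c" by (simp add: add_divide_distrib)
  hence "real v < real (aj c j) + 1 + (real r - 1)" using a2 aj_gt[OF c(1), of j] c(2) by linarith
  thus "v < aj c j + r" by linarith
qed

lemma ovl_zero_far:
  assumes "c > 0" "real (Suc j) / c \<le> real v"
  shows "ovl c j v = 0"
  using assms ovl_pos_D[OF assms(1)] ovl_nonneg[OF assms(1)] by (meson linorder_not_le order.not_eq_order_implies_strict)

lemma ovl_sum_all:
  assumes c: "c > 0" and N: "real (Suc j) / c \<le> real N"
  shows "(\<Sum>v<N. ovl c j v) = 1 / c"
proof -
  have "(\<Sum>v<N. ovl c j v) = (\<Sum>v<N. clampv v (real (Suc j) / c) - real v) - (\<Sum>v<N. clampv v (real j / c) - real v)"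
    unfolding ovl_def by (simp add: sum_subtractf[symmetric])
  also have "\<dots> = min (real N) (max 0 (real (Suc j) / c)) - min (real N) (max 0 (real j / c))"
    by (simp add: clamp_sum)
  also have "\<dots> = real (Suc j) / c - real j / c"
  proof -
    have "real j / c \<le> real (Suc j) / c" using c by (intro divide_right_mono) auto
    moreover have "0 \<le> real j / c" using c by auto
    ultimately show ?thesis using N by (simp add: min_def max_def)
  qed
  also have "\<dots> = 1 / c" using c by (simp add: field_simps)
  finally show ?thesis .
qed

lemma ovl_sum_j:
  assumes c: "c > 0"
  shows "(\<Sum>j<p. ovl c j v) \<le> 1"
proof -
  have "(\<Sum>j<p. ovl c j v) = clampv v (real p / c) - clampv v (real 0 / c)"
    unfolding ovl_def by (rule sum_lessThan_telescope[where f = "\<lambda>j. clampv v (real j / c)"])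
  also have "\<dots> \<le> 1" by (auto simp: clampv_def min_def max_def)
  finally show ?thesis .
qed

lemma aj_lt_M:
  assumes c: "c > 0" and jM: "real (Suc j) \<le> c * real M"
  shows "aj c j < M"
proof -
  have "real (Suc j) / c \<le> real M" using jM c by (simp add: divide_le_eq mult.commute)
  moreover have "real j / c < real (Suc j) / c" using c by (intro divide_strict_right_mono) auto
  ultimately have "real (aj c j) < real M" using aj_le[OF c, of j] by linarith
  thus ?thesis by simp
qed

lemma fe_card:
  assumes c: "c > 0" and r: "r \<ge> 2" and jM: "real (Suc j) \<le> c * real M"
  shows "card (fe c r M K j) = r"
proof -
  have aM: "aj c j < M" by (rule aj_lt_M[OF c jM])
  have "exv c r M K j \<notin> {aj c j ..< aj c j + r - 1}"
    using aM unfolding exv_def by auto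
  hence "card (fe c r M K j) = card {aj c j ..< aj c j + r - 1} + 1"
    unfolding fe_def by simp
  thus ?thesis using r by simp
qed

lemma fe_sub:
  assumes c: "c > 0" and r: "r \<ge> 2" and jM: "real (Suc j) \<le> c * real M" and K: "K > 0"
  shows "fe c r M K j \<subseteq> {..< M + r + K}"
  using aj_lt_M[OF c jM] K unfolding fe_def exv_def by auto

lemma aj_in_fe:
  assumes r: "r \<ge> 2"
  shows "aj c j \<in> fe c r M K j"
  using r unfolding fe_def by auto

lemma fe_weight:
  assumes c: "c > 0" "1 / c \<le> real r - 1" and r: "r \<ge> 2" and jM: "real (Suc j) \<le> c * real M" and K: "K > 0"
  shows "(\<Sum>v\<in>fe c r M K j. c * ovl c j v) = 1"
proof -
  let ?N = "M + r + K"
  have "(\<Sum>v\<in>fe c r M K j. ovl c j v) = (\<Sum>v<?N. ovl c j v)"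
  proof (rule sum.mono_neutral_left)
    show "fe c r M K j \<subseteq> {..<?N}" by (rule fe_sub[OF c(1) r jM K])
    show "\<forall>v\<in>{..<?N} - fe c r M K j. ovl c j v = 0"
    proof
      fix v assume v: "v \<in> {..<?N} - fe c r M K j"
      show "ovl c j v = 0"
      proof (rule ccontr)
        assume "ovl c j v \<noteq> 0"
        hence p: "ovl c j v > 0" using ovl_nonneg[OF c(1), of j v] by linarith
        have "aj c j \<le> v" "v < aj c j + r" using ovl_pos_range[OF c p] by auto
        moreover have "v \<notin> {aj c j ..< aj c j + r - 1}" "v \<noteq> exv c r M K j" using v unfolding fe_def by auto
        ultimately have "v = aj c j + r - 1" by auto
        hence "exv c r M K j = v" using p unfolding exv_def by simp
        thus False using \<open>v \<noteq> exv c r M K j\<close> by simp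
      qed
    qed
  qed auto
  also have "\<dots> = 1 / c"
  proof (rule ovl_sum_all[OF c(1)])
    have "c * real M \<le> c * real ?N" using c(1) by (intro mult_left_mono) auto
    hence "real (Suc j) \<le> c * real ?N" using jM by linarith
    thus "real (Suc j) / c \<le> real ?N" using c(1) by (simp add: divide_le_eq mult.commute)
  qed
  finally show ?thesis using c by (simp add: sum_distrib_left[symmetric])
qed

lemma fe_inj_aux:
  assumes c: "c > 0" "1 / c \<le> real r - 1" and r: "r \<ge> 2" and K: "c < real K"
    and jj: "j < j'" and j'M: "real (Suc j') \<le> c * real M"
    and eq: "fe c r M K j = fe c r M K j'"
  shows False
proof -
  have jM: "real (Suc j) \<le> c * real M" using jj j'M by simp
  have geq: "\<And>x. x \<in> fe c r M K j' \<Longrightarrow> aj c j' \<le> x"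
    using aj_lt_M[OF c(1) j'M] r unfolding fe_def exv_def by auto
  have "aj c j \<in> fe c r M K j'" using aj_in_fe[OF r] eq by metis
  hence a1: "aj c j' \<le> aj c j" by (rule geq)
  have "aj c j \<le> aj c j'" unfolding aj_def using c(1) jj
    by (intro nat_mono floor_mono divide_right_mono) auto
  hence aeq: "aj c j = aj c j'" using a1 by simp
  define a where "a = aj c j"
  have "real a \<le> real j / c" unfolding a_def by (rule aj_le[OF c(1)])
  moreover have "real j' / c < real a + 1" unfolding a_def aeq by (rule aj_gt[OF c(1)])
  ultimately have "real j' / c - real j / c < 1" by linarith
  hence "(real j' - real j) / c < 1" by (simp add: diff_divide_distrib)
  hence djj: "real j' - real j < c" using c(1) by (simp add: divide_less_eq)
  have "real (Suc j) / c \<le> real j' / c" using jj c(1) by (intro divide_right_mono) auto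
  hence "real (Suc j) / c \<le> real (a + r - 1)" using \<open>real j' / c < real a + 1\<close> r by simp
  hence "ovl c j (a + r - 1) = 0" by (rule ovl_zero_far[OF c(1)])
  hence exj: "exv c r M K j = M + r + j mod K" unfolding exv_def a_def by simp
  hence "M + r + j mod K \<in> fe c r M K j'" using eq unfolding fe_def by auto
  moreover have aM: "aj c j' < M" by (rule aj_lt_M[OF c(1) j'M])
  ultimately have "M + r + j mod K = exv c r M K j'" unfolding fe_def by auto
  hence "M + r + j mod K = M + r + j' mod K" using aM unfolding exv_def by (auto split: if_splits)
  hence "j mod K = j' mod K" by simp
  moreover have "j' - j < K" using djj K jj by linarith
  moreover have "0 < j' - j" using jj by simp
  ultimately show False
    by (metis jj less_imp_le_nat mod_eq_dvd_iff_nat nat_dvd_not_less)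
qed

lemma fe_inj:
  assumes c: "c > 0" "1 / c \<le> real r - 1" and r: "r \<ge> 2" and K: "c < real K"
    and pM: "real p \<le> c * real M"
  shows "inj_on (fe c r M K) {..<p}"
proof (rule inj_onI)
  fix j j' assume j: "j \<in> {..<p}" and j': "j' \<in> {..<p}" and eq: "fe c r M K j = fe c r M K j'"
  show "j = j'"
  proof (rule ccontr)
    assume "j \<noteq> j'"
    hence "j < j' \<or> j' < j" by auto
    thus False
    proof
      assume "j < j'"
      thus False using fe_inj_aux[OF c r K _ _ eq] j' pM by fastforce
    next
      assume "j' < j"
      thus False using fe_inj_aux[OF c r K _ _ eq[symmetric]] j pM by fastforce
    qed
  qed
qed




definition bedge :: "nat \<Rightarrow> (nat \<Rightarrow> nat set) \<Rightarrow> (nat \<times> nat \<Rightarrow> nat \<Rightarrow> nat) \<Rightarrow> nat \<Rightarrow> nat \<Rightarrow> nat set" where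
  "bedge s e \<pi> j i = (\<lambda>t. t * s + 1 + \<pi> (j, t) i) ` e j"

definition bset :: "nat \<Rightarrow> nat \<Rightarrow> (nat \<Rightarrow> nat set) \<Rightarrow> (nat \<times> nat \<Rightarrow> nat \<Rightarrow> nat) \<Rightarrow> nat set set" where
  "bset s p e \<pi> = (\<Union>j<p. \<Union>i<s. {bedge s e \<pi> j i})"

definition dec :: "nat \<Rightarrow> nat \<Rightarrow> nat" where
  "dec s x = (x - 1) div s"

lemma dec_enc: "y < s \<Longrightarrow> dec s (t * s + 1 + y) = t"
  unfolding dec_def by simp

lemma enc_inj: "(y::nat) < s \<Longrightarrow> y' < s \<Longrightarrow> t * s + 1 + y = t' * s + 1 + y' \<Longrightarrow> t = t' \<and> y = y'"
proof -
  assume a: "y < s" "y' < s" and eq: "t * s + 1 + y = t' * s + 1 + y'"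
  have "t = t'" using dec_enc[OF a(1), of t] dec_enc[OF a(2), of t'] eq by simp
  thus ?thesis using eq by simp
qed

lemma card_Dom:
  fixes e :: "nat \<Rightarrow> nat set" and ow :: "nat \<Rightarrow> nat"
  assumes fin: "\<forall>j<p. finite (e j)" and e_card: "\<forall>j<p. card (e j) = r" and ow: "\<forall>j<p. ow j \<in> e j"
  shows "card (PiE (SIGMA j:{..<p}. e j) (\<lambda>(j,t). if t = ow j then {id} else {f. f permutes {..<s}}))
         = fact s ^ ((r-1)*p)"
proof -
  have finS: "finite (SIGMA j:{..<p}. e j)" using fin by auto
  have "card (PiE (SIGMA j:{..<p}. e j) (\<lambda>(j,t). if t = ow j then {id} else {f. f permutes {..<s}}))
      = (\<Prod>x\<in>(SIGMA j:{..<p}. e j). card ((\<lambda>(j,t). if t = ow j then {id} else {f. f permutes {..<s}}) x))"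
    by (rule card_PiE[OF finS])
  also have "\<dots> = (\<Prod>x\<in>(SIGMA j:{..<p}. e j). case_prod (\<lambda>j t. if t = ow j then 1 else fact s) x)"
    by (intro prod.cong refl) (auto simp: card_permutations)
  also have "\<dots> = (\<Prod>j<p. \<Prod>t\<in>e j. (if t = ow j then 1 else fact s))"
    by (rule prod.Sigma[symmetric]) (use fin in auto)
  also have "\<dots> = (\<Prod>j<p. fact s ^ (r - 1))"
  proof (intro prod.cong refl)
    fix j assume j: "j \<in> {..<p}"
    have "(\<Prod>t\<in>e j. (if t = ow j then 1 else fact s)) = (if ow j = ow j then 1 else fact s) * (\<Prod>t\<in>e j - {ow j}. (if t = ow j then 1 else fact s))"
      using fin ow j by (intro prod.remove) auto
    also have "\<dots> = (\<Prod>t\<in>e j - {ow j}. fact s)" by simp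
    also have "\<dots> = fact s ^ (r - 1)" using fin ow e_card j by simp
    finally show "(\<Prod>t\<in>e j. (if t = ow j then 1 else fact s)) = fact s ^ (r - 1)" .
  qed
  also have "\<dots> = fact s ^ ((r-1)*p)" by (simp add: power_mult)
  finally show ?thesis .
qed

definition good :: "nat \<Rightarrow> nat \<Rightarrow> (nat \<Rightarrow> nat set) \<Rightarrow> (nat \<Rightarrow> nat) \<Rightarrow> (nat \<times> nat \<Rightarrow> nat \<Rightarrow> nat) \<Rightarrow> bool" where
  "good s p e ow \<pi> \<longleftrightarrow> (\<forall>j<p. \<forall>t\<in>e j. \<pi> (j,t) permutes {..<s}) \<and> (\<forall>j<p. \<pi> (j, ow j) = id)"

lemma good_lt:
  assumes "good s p e ow \<pi>" "j < p" "t \<in> e j" "i < s"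
  shows "\<pi> (j,t) i < s"
proof -
  have "\<pi> (j,t) permutes {..<s}" using assms unfolding good_def by auto
  thus ?thesis using permutes_in_image[of "\<pi> (j,t)" "{..<s}" i] assms(4) by simp
qed

lemma good_inj:
  assumes "good s p e ow \<pi>" "j < p" "t \<in> e j" "\<pi> (j,t) i = \<pi> (j,t) i'"
  shows "i = i'"
proof -
  have "\<pi> (j,t) permutes {..<s}" using assms unfolding good_def by auto
  hence "inj (\<pi> (j,t))" by (rule permutes_inj)
  thus ?thesis using assms(4) by (simp add: inj_eq)
qed

lemma bedge_dec:
  assumes "good s p e ow \<pi>" "j < p" "i < s"
  shows "dec s ` bedge s e \<pi> j i = e j"
proof -
  have "dec s ` bedge s e \<pi> j i = (\<lambda>t. dec s (t * s + 1 + \<pi> (j, t) i)) ` e j"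
    unfolding bedge_def by (simp add: image_image)
  also have "\<dots> = (\<lambda>t. t) ` e j"
    by (intro image_cong refl dec_enc good_lt[OF assms(1,2) _ assms(3)])
  finally show ?thesis by simp
qed

lemma bedge_elem:
  assumes "good s p e ow \<pi>" "j < p" "i < s" "y \<in> bedge s e \<pi> j i"
  shows "y = dec s y * s + 1 + \<pi> (j, dec s y) i" "dec s y \<in> e j"
proof -
  obtain t where t: "t \<in> e j" "y = t * s + 1 + \<pi> (j, t) i" using assms(4) unfolding bedge_def by auto
  have "dec s y = t" using t dec_enc good_lt[OF assms(1,2) t(1) assms(3)] by simp
  thus "y = dec s y * s + 1 + \<pi> (j, dec s y) i" "dec s y \<in> e j" using t by auto
qed

lemma bedge_inj_on:
  assumes "good s p e ow \<pi>" "j < p" "i < s"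
  shows "inj_on (\<lambda>t. t * s + 1 + \<pi> (j, t) i) (e j)"
proof (rule inj_onI)
  fix t t' assume "t \<in> e j" "t' \<in> e j" "t * s + 1 + \<pi> (j, t) i = t' * s + 1 + \<pi> (j, t') i"
  thus "t = t'" using enc_inj good_lt[OF assms(1,2) _ assms(3)] by blast
qed

definition jof :: "nat \<Rightarrow> nat \<Rightarrow> (nat \<Rightarrow> nat set) \<Rightarrow> nat set \<Rightarrow> nat" where
  "jof s p e X = (THE j. j < p \<and> dec s ` X = e j)"

lemma jof_eq:
  assumes "good s p e ow \<pi>" "j < p" "i < s" "inj_on e {..<p}"
  shows "jof s p e (bedge s e \<pi> j i) = j"
  unfolding jof_def
proof (rule the_equality)
  show "j < p \<and> dec s ` bedge s e \<pi> j i = e j" using bedge_dec[OF assms(1-3)] assms(2) by simp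
  fix j' assume "j' < p \<and> dec s ` bedge s e \<pi> j i = e j'"
  hence "e j' = e j" "j' < p" using bedge_dec[OF assms(1-3)] by auto
  thus "j' = j" using assms(2,4) by (auto dest: inj_onD)
qed

lemma bset_density:
  fixes c :: real and w :: "nat \<Rightarrow> nat \<Rightarrow> real"
  assumes g: "good s p e ow \<pi>" and e_inj: "inj_on e {..<p}" and fin: "\<forall>j<p. finite (e j)"
    and w_nn: "\<forall>j<p. \<forall>t. 0 \<le> w j t" and w_sum: "\<forall>j<p. (\<Sum>t\<in>e j. w j t) = 1"
    and w_load: "\<forall>t. (\<Sum>j<p. w j t) \<le> c"
    and U: "finite U"
  shows "real (card (induced_edges (bset s p e \<pi>) U)) \<le> c * real (card U)"
proof -
  define E where "E = bset s p e \<pi>"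
  define EU where "EU = induced_edges E U"
  define W where "W X x = w (jof s p e X) (dec s x)" for X x
  have finE: "finite E" unfolding E_def bset_def by auto
  have finEU: "finite EU" unfolding EU_def induced_edges_def using finE by auto
  have Eform: "\<exists>j i. j < p \<and> i < s \<and> X = bedge s e \<pi> j i" if "X \<in> E" for X
    using that unfolding E_def bset_def by auto
  have Wsum: "(\<Sum>x\<in>X. W X x) = 1" if XE: "X \<in> E" for X
  proof -
    obtain j i where ji: "j < p" "i < s" "X = bedge s e \<pi> j i" using Eform[OF XE] by blast
    have "(\<Sum>x\<in>X. W X x) = (\<Sum>x\<in>(\<lambda>t. t * s + 1 + \<pi> (j, t) i) ` e j. w j (dec s x))"
      unfolding W_def ji(3) jof_eq[OF g ji(1,2) e_inj] by (simp add: bedge_def)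
    also have "\<dots> = (\<Sum>t\<in>e j. w j (dec s (t * s + 1 + \<pi> (j, t) i)))"
      by (subst sum.reindex[OF bedge_inj_on[OF g ji(1,2)]]) simp
    also have "\<dots> = (\<Sum>t\<in>e j. w j t)"
    proof (intro sum.cong refl)
      fix t assume t: "t \<in> e j"
      have lt: "\<pi> (j, t) i < s" by (rule good_lt[OF g ji(1) t ji(2)])
      show "w j (dec s (t * s + 1 + \<pi> (j, t) i)) = w j t" using dec_enc[OF lt, of t] by (rule arg_cong)
    qed
    finally show ?thesis using w_sum ji(1) by simp
  qed
  have Wnn: "0 \<le> W X x" if XE: "X \<in> E" for X x
  proof -
    obtain j i where ji: "j < p" "i < s" "X = bedge s e \<pi> j i" using Eform[OF XE] by blast
    show ?thesis unfolding W_def ji(3) jof_eq[OF g ji(1,2) e_inj] using w_nn ji(1) by simp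
  qed
  have EUsub: "X \<in> E" "X \<subseteq> U" if "X \<in> EU" for X using that unfolding EU_def induced_edges_def by auto
  have "real (card EU) = (\<Sum>X\<in>EU. (\<Sum>x\<in>X. W X x))"
    using Wsum EUsub by simp
  also have "\<dots> = (\<Sum>X\<in>EU. (\<Sum>x\<in>{x. x \<in> U \<and> x \<in> X}. W X x))"
  proof (rule sum.cong[OF refl])
    fix X assume "X \<in> EU"
    hence "{x. x \<in> U \<and> x \<in> X} = X" using EUsub by auto
    thus "(\<Sum>x\<in>X. W X x) = (\<Sum>x\<in>{x. x \<in> U \<and> x \<in> X}. W X x)" by simp
  qed
  also have "\<dots> = (\<Sum>x\<in>U. (\<Sum>X\<in>{X. X \<in> EU \<and> x \<in> X}. W X x))"
    by (rule sum.swap_restrict[OF finEU U])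
  also have "\<dots> \<le> (\<Sum>x\<in>U. c)"
  proof (rule sum_mono)
    fix x assume "x \<in> U"
    have "(\<Sum>X\<in>{X. X \<in> EU \<and> x \<in> X}. W X x) \<le> (\<Sum>X\<in>{X. X \<in> E \<and> x \<in> X}. W X x)"
      by (rule sum_mono2) (use finE EUsub Wnn in auto)
    also have "\<dots> = (\<Sum>j\<in>jof s p e ` {X. X \<in> E \<and> x \<in> X}. w j (dec s x))"
    proof -
      have "inj_on (jof s p e) {X. X \<in> E \<and> x \<in> X}"
      proof (rule inj_onI)
        fix X X' assume X: "X \<in> {X. X \<in> E \<and> x \<in> X}" and X': "X' \<in> {X. X \<in> E \<and> x \<in> X}"
          and eq: "jof s p e X = jof s p e X'"
        obtain j i where ji: "j < p" "i < s" "X = bedge s e \<pi> j i" using Eform X by blast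
        obtain j' i' where ji': "j' < p" "i' < s" "X' = bedge s e \<pi> j' i'" using Eform X' by blast
        have jj: "j = j'" using eq jof_eq[OF g ji(1,2) e_inj] jof_eq[OF g ji'(1,2) e_inj] ji(3) ji'(3) by simp
        have x1: "x = dec s x * s + 1 + \<pi> (j, dec s x) i" "dec s x \<in> e j"
          using bedge_elem[OF g ji(1,2)] X ji(3) by auto
        have x2: "x = dec s x * s + 1 + \<pi> (j, dec s x) i'"
          using bedge_elem[OF g ji'(1,2)] X' ji'(3) jj by auto
        have "\<pi> (j, dec s x) i = \<pi> (j, dec s x) i'" using x1(1) x2 by linarith
        hence "i = i'" by (rule good_inj[OF g ji(1) x1(2)])
        thus "X = X'" using ji(3) ji'(3) jj by simp
      qed
      thus ?thesis unfolding W_def by (simp add: sum.reindex)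
    qed
    also have "\<dots> \<le> (\<Sum>j<p. w j (dec s x))"
    proof (rule sum_mono2)
      show "jof s p e ` {X. X \<in> E \<and> x \<in> X} \<subseteq> {..<p}"
      proof
        fix j0 assume "j0 \<in> jof s p e ` {X. X \<in> E \<and> x \<in> X}"
        then obtain X where X: "X \<in> E" "j0 = jof s p e X" by auto
        obtain j i where ji: "j < p" "i < s" "X = bedge s e \<pi> j i" using Eform X(1) by blast
        show "j0 \<in> {..<p}" using X(2) ji jof_eq[OF g ji(1,2) e_inj] by simp
      qed
    qed (use w_nn in auto)
    also have "\<dots> \<le> c" using w_load by simp
    finally show "(\<Sum>X\<in>{X. X \<in> EU \<and> x \<in> X}. W X x) \<le> c" .
  qed
  also have "\<dots> = c * real (card U)" by simp
  finally show ?thesis unfolding EU_def E_def .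
qed


lemma bset_inj:
  assumes g: "good s p e ow \<pi>" and g': "good s p e ow \<pi>'" and e_inj: "inj_on e {..<p}"
    and ow: "\<forall>j<p. ow j \<in> e j"
    and eq: "bset s p e \<pi> = bset s p e \<pi>'" and jp: "j < p" and t: "t \<in> e j" and i: "i < s"
  shows "\<pi> (j,t) i = \<pi>' (j,t) i"
proof -
  have "bedge s e \<pi> j i \<in> bset s p e \<pi>" using jp i unfolding bset_def by auto
  hence "bedge s e \<pi> j i \<in> bset s p e \<pi>'" using eq by simp
  then obtain j' i' where ji': "j' < p" "i' < s" "bedge s e \<pi> j i = bedge s e \<pi>' j' i'"
    unfolding bset_def by auto
  have "e j = e j'" using bedge_dec[OF g jp i] bedge_dec[OF g' ji'(1,2)] ji'(3) by simp
  hence jj: "j' = j" using jp ji'(1) e_inj by (auto dest: inj_onD)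
  have idj: "\<pi> (j, ow j) = id" "\<pi>' (j, ow j) = id" using g g' jp unfolding good_def by auto
  define y0 where "y0 = ow j * s + 1 + i"
  have "ow j * s + 1 + \<pi> (j, ow j) i \<in> bedge s e \<pi> j i" unfolding bedge_def using ow jp by blast
  hence "y0 \<in> bedge s e \<pi> j i" unfolding y0_def using idj by simp
  hence y0m: "y0 \<in> bedge s e \<pi>' j i'" using ji'(3) jj by simp
  have d0: "dec s y0 = ow j" unfolding y0_def using dec_enc[OF i] by simp
  have "y0 = ow j * s + 1 + i'" using bedge_elem(1)[OF g' jp ji'(2) y0m] d0 idj by simp
  hence ii: "i' = i" unfolding y0_def by simp
  define y where "y = t * s + 1 + \<pi> (j,t) i"
  have lt: "\<pi> (j,t) i < s" by (rule good_lt[OF g jp t i])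
  have "y \<in> bedge s e \<pi> j i" unfolding y_def bedge_def using t by blast
  hence ym: "y \<in> bedge s e \<pi>' j i" using ji'(3) jj ii by simp
  have dy: "dec s y = t" unfolding y_def by (rule dec_enc[OF lt])
  have "y = t * s + 1 + \<pi>' (j,t) i" using bedge_elem(1)[OF g' jp i ym] dy by simp
  thus ?thesis unfolding y_def by simp
qed

lemma blowup_lower:
  fixes r n q p s :: nat and c :: real and e :: "nat \<Rightarrow> nat set" and ow :: "nat \<Rightarrow> nat"
    and w :: "nat \<Rightarrow> nat \<Rightarrow> real"
  assumes e_sub: "\<forall>j<p. e j \<subseteq> {..<q}" and e_card: "\<forall>j<p. card (e j) = r" and ow: "\<forall>j<p. ow j \<in> e j"
    and e_inj: "inj_on e {..<p}"
    and w_nn: "\<forall>j<p. \<forall>t. 0 \<le> w j t" and w_sum: "\<forall>j<p. (\<Sum>t\<in>e j. w j t) = 1"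
    and w_load: "\<forall>t. (\<Sum>j<p. w j t) \<le> c"
    and n: "q * s \<le> n"
  shows "fact s ^ ((r-1)*p) \<le> card (Q_class r c n)"
proof -
  have fin: "\<forall>j<p. finite (e j)" using e_sub finite_subset by blast
  define Dom where "Dom = PiE (SIGMA j:{..<p}. e j) (\<lambda>(j,t). if t = ow j then {id} else {f. f permutes {..<s}})"
  have cardDom: "card Dom = fact s ^ ((r-1)*p)" unfolding Dom_def by (rule card_Dom[OF fin e_card ow])
  have goodD: "good s p e ow \<pi>" if "\<pi> \<in> Dom" for \<pi>
  proof -
    have "\<pi> (j,t) \<in> (if t = ow j then {id} else {f. f permutes {..<s}})" if "j < p" "t \<in> e j" for j t
      using \<open>\<pi> \<in> Dom\<close> that unfolding Dom_def by (auto dest: PiE_mem)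
    note mem = this
    show ?thesis unfolding good_def
    proof (intro conjI allI impI ballI)
      fix j t assume "j < p" "t \<in> e j"
      thus "\<pi> (j,t) permutes {..<s}" using mem[of j t] by (cases "t = ow j") auto
    next
      fix j assume "j < p"
      thus "\<pi> (j, ow j) = id" using mem[of j "ow j"] ow by auto
    qed
  qed
  have inQ: "bset s p e \<pi> \<in> Q_class r c n" if "\<pi> \<in> Dom" for \<pi>
  proof -
    have g: "good s p e ow \<pi>" by (rule goodD[OF that])
    have edge_ok: "X \<subseteq> {1..n} \<and> card X = r" if XB: "X \<in> bset s p e \<pi>" for X
    proof -
      obtain j i where ji: "j < p" "i < s" "X = bedge s e \<pi> j i" using XB unfolding bset_def by auto
      have "card X = r" unfolding ji(3) bedge_def using card_image[OF bedge_inj_on[OF g ji(1,2)]] e_card ji(1) by simp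
      moreover have "X \<subseteq> {1..n}"
      proof
        fix x assume "x \<in> X"
        then obtain t where t: "t \<in> e j" "x = t * s + 1 + \<pi> (j, t) i" unfolding ji(3) bedge_def by auto
        have lt: "\<pi> (j, t) i < s" by (rule good_lt[OF g ji(1) t(1) ji(2)])
        have "t < q" using e_sub ji(1) t(1) by auto
        hence "Suc t * s \<le> q * s" by (intro mult_le_mono1) simp
        thus "x \<in> {1..n}" using t(2) lt n by simp
      qed
      ultimately show ?thesis by simp
    qed
    have "bset s p e \<pi> \<in> hypergraphs_on r n" unfolding hypergraphs_on_def using edge_ok by auto
    moreover have "real (card (induced_edges (bset s p e \<pi>) U)) \<le> c * real (card U)" if "U \<subseteq> {1..n}" for U
      by (rule bset_density[OF g e_inj fin w_nn w_sum w_load]) (use that finite_subset in blast)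
    ultimately show ?thesis unfolding Q_class_def by auto
  qed
  have injD: "inj_on (bset s p e) Dom"
  proof (rule inj_onI)
    fix \<pi> \<pi>' assume p1: "\<pi> \<in> Dom" and p2: "\<pi>' \<in> Dom" and eq: "bset s p e \<pi> = bset s p e \<pi>'"
    have g: "good s p e ow \<pi>" "good s p e ow \<pi>'" using goodD p1 p2 by auto
    show "\<pi> = \<pi>'"
    proof (rule ext)
      fix x :: "nat \<times> nat"
      show "\<pi> x = \<pi>' x"
      proof (cases "x \<in> (SIGMA j:{..<p}. e j)")
        case False
        have "\<pi> x = undefined" using PiE_arb[OF p1[unfolded Dom_def] False] .
        moreover have "\<pi>' x = undefined" using PiE_arb[OF p2[unfolded Dom_def] False] .
        ultimately show ?thesis by simp
      next
        case True
        then obtain j t where x: "x = (j,t)" "j < p" "t \<in> e j" by auto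
        have pm: "\<pi> (j,t) permutes {..<s}" "\<pi>' (j,t) permutes {..<s}" using g x unfolding good_def by auto
        show ?thesis
        proof (rule ext)
          fix i show "\<pi> x i = \<pi>' x i"
          proof (cases "i < s")
            case True thus ?thesis using bset_inj[OF g e_inj ow eq x(2,3) True] x(1) by simp
          next
            case False thus ?thesis using permutes_not_in[OF pm(1)] permutes_not_in[OF pm(2)] x(1) by simp
          qed
        qed
      qed
    qed
  qed
  have finQ: "finite (Q_class r c n)"
    by (rule finite_subset[of _ "Pow (Pow {1..n})"]) (auto simp: Q_class_def hypergraphs_on_def)
  have "card Dom = card (bset s p e ` Dom)" by (rule card_image[OF injD, symmetric])
  also have "\<dots> \<le> card (Q_class r c n)" by (rule card_mono[OF finQ]) (use inQ in auto)
  finally show ?thesis using cardDom by simp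
qed




lemma Q_lower_param:
  fixes r M s n :: nat and c :: real
  assumes r: "r \<ge> 2" and c: "c > 0" "1 / c \<le> real r - 1"
    and n: "(M + r + (nat \<lceil>c\<rceil> + 1)) * s \<le> n"
  shows "fact s ^ ((r-1) * nat \<lfloor>c * real M\<rfloor>) \<le> card (Q_class r c n)"
proof -
  define K where "K = nat \<lceil>c\<rceil> + 1"
  define p where "p = nat \<lfloor>c * real M\<rfloor>"
  have K0: "K > 0" unfolding K_def by simp
  have cK: "c < real K" unfolding K_def by linarith
  have pM: "real p \<le> c * real M" unfolding p_def using c(1) by (simp add: of_nat_nat)
  have jM: "real (Suc j) \<le> c * real M" if "j < p" for j
  proof -
    have "real (Suc j) \<le> real p" using that by simp
    thus ?thesis using pM by linarith
  qed
  have "fact s ^ ((r-1)*p) \<le> card (Q_class r c n)"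
  proof (rule blowup_lower[where e = "fe c r M K" and ow = "aj c" and w = "\<lambda>j t. c * ovl c j t" and q = "M + r + K"])
    show "\<forall>j<p. fe c r M K j \<subseteq> {..<M + r + K}" using fe_sub[OF c(1) r jM K0] by blast
    show "\<forall>j<p. card (fe c r M K j) = r" using fe_card[OF c(1) r jM] by blast
    show "\<forall>j<p. aj c j \<in> fe c r M K j" using aj_in_fe[OF r] by blast
    show "inj_on (fe c r M K) {..<p}" by (rule fe_inj[OF c r cK pM])
    show "\<forall>j<p. \<forall>t. 0 \<le> c * ovl c j t" using c(1) ovl_nonneg[OF c(1)] by simp
    show "\<forall>j<p. (\<Sum>t\<in>fe c r M K j. c * ovl c j t) = 1" using fe_weight[OF c r jM K0] by blast
    show "\<forall>t. (\<Sum>j<p. c * ovl c j t) \<le> c"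
    proof
      fix t
      have "(\<Sum>j<p. c * ovl c j t) = c * (\<Sum>j<p. ovl c j t)" by (simp add: sum_distrib_left)
      also have "\<dots> \<le> c * 1" using ovl_sum_j[OF c(1)] c(1) by (intro mult_left_mono) auto
      finally show "(\<Sum>j<p. c * ovl c j t) \<le> c" by simp
    qed
    show "(M + r + K) * s \<le> n" using n unfolding K_def .
  qed
  thus ?thesis unfolding p_def .
qed

lemma Q_sub_S: "Q_class r c n \<subseteq> S_class r c n"
proof
  fix E assume E: "E \<in> Q_class r c n"
  hence H: "E \<in> hypergraphs_on r n" and "real (card (induced_edges E {1..n})) \<le> c * real (card {1..n})"
    unfolding Q_class_def by auto
  moreover have "induced_edges E {1..n} = E" using H unfolding induced_edges_def hypergraphs_on_def by auto
  ultimately show "E \<in> S_class r c n" unfolding S_class_def by auto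
qed

lemma finite_S: "finite (S_class r c n)"
  by (rule finite_subset[of _ "Pow (Pow {1..n})"]) (auto simp: S_class_def hypergraphs_on_def)

lemma card_Q_le_S: "card (Q_class r c n) \<le> card (S_class r c n)"
  by (rule card_mono[OF finite_S Q_sub_S])

lemma card_Q_pos: assumes "c \<ge> 0" shows "card (Q_class r c n) \<ge> 1"
proof -
  have "{} \<in> Q_class r c n" using assms unfolding Q_class_def hypergraphs_on_def induced_edges_def by auto
  moreover have "finite (Q_class r c n)" using finite_subset[OF Q_sub_S finite_S] .
  ultimately show ?thesis by (metis One_nat_def Suc_leI card_gt_0_iff empty_iff)
qed




lemma ln_card_S_upper:
  fixes r n :: nat and c :: real
  assumes n: "n \<ge> 2" and r: "r \<ge> 2" and c: "c \<ge> 0"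
  shows "ln (real (card (S_class r c n))) \<le> (real r - 1) * c * real n * ln (real n) + real n"
proof -
  define m where "m = nat \<lfloor>c * real n\<rfloor>"
  have pos: "real (card (S_class r c n)) \<ge> 1" using card_Q_pos[OF c, of r n] card_Q_le_S[of r c n] by linarith
  have up: "real (card (S_class r c n)) \<le> real n ^ ((r-1) * m) * exp (real n)"
    using card_S_upper[of n r c] n r unfolding m_def by simp
  have "ln (real (card (S_class r c n))) \<le> ln (real n ^ ((r-1) * m) * exp (real n))"
    using pos up by (subst ln_le_cancel_iff) auto
  also have "\<dots> = real ((r-1) * m) * ln (real n) + real n"
    using n by (simp add: ln_mult ln_realpow)
  also have "\<dots> \<le> (real r - 1) * c * real n * ln (real n) + real n"
  proof -
    have m: "real m \<le> c * real n" unfolding m_def using c by (simp add: of_nat_nat)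
    have "real ((r-1) * m) = (real r - 1) * real m" using r by (simp add: of_nat_diff)
    also have "\<dots> \<le> (real r - 1) * (c * real n)" using m r by (intro mult_left_mono) auto
    finally have "real ((r-1) * m) * ln (real n) \<le> (real r - 1) * (c * real n) * ln (real n)"
      using n by (intro mult_right_mono) auto
    thus ?thesis by (simp add: mult.assoc)
  qed
  finally show ?thesis .
qed


lemma ln_card_Q_lower:
  fixes r :: nat and c \<epsilon> :: real
  assumes r: "r \<ge> 2" and c: "c > 0" "1 / c \<le> real r - 1" and eps: "\<epsilon> > 0"
  shows "\<exists>N. \<forall>n\<ge>N. (real r - 1) * (c - \<epsilon>) * real n * ln (real n) \<le> ln (real (card (Q_class r c n)))"
proof (cases "c \<le> \<epsilon>")
  case True
  show ?thesis
  proof (intro exI allI impI)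
    fix n :: nat assume n: "n \<ge> 1"
    have "real (card (Q_class r c n)) \<ge> 1" using card_Q_pos[of c r n] c by simp
    hence "ln (real (card (Q_class r c n))) \<ge> 0" by simp
    moreover have "(real r - 1) * (c - \<epsilon>) * real n * ln (real n) \<le> 0"
    proof -
      have "(real r - 1) * (c - \<epsilon>) \<le> 0" using True r by (simp add: mult_nonneg_nonpos)
      moreover have "real n * ln (real n) \<ge> 0" using n by simp
      ultimately show ?thesis by (metis mult.assoc mult_nonpos_nonneg)
    qed
    ultimately show "(real r - 1) * (c - \<epsilon>) * real n * ln (real n) \<le> ln (real (card (Q_class r c n)))"
      by linarith
  qed
next
  case False
  hence ce: "\<epsilon> < c" by simp
  define K where "K = nat \<lceil>c\<rceil> + 1"
  define M where "M = nat \<lceil>2 * (1 + c * (real r + real K)) / \<epsilon>\<rceil>"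
  define p where "p = nat \<lfloor>c * real M\<rfloor>"
  define q where "q = M + r + K"
  define D where "D = ln (2 * real q) + 1"
  define A where "A = max D (4 * c * D / \<epsilon>)"
  define N where "N = max (4 * q) (max (nat \<lceil>4 * c * real q / \<epsilon>\<rceil>) (nat \<lceil>exp A\<rceil>))"
  have q0: "real q \<ge> 2" unfolding q_def using r by simp
  have hM: "real M \<ge> 2 * (1 + c * (real r + real K)) / \<epsilon>" unfolding M_def by linarith
  hence hM': "\<epsilon> / 2 * real M \<ge> 1 + c * (real r + real K)" using eps by (simp add: field_simps)
  have hp: "real p \<ge> (c - \<epsilon>/2) * real q"
  proof -
    have "real p \<ge> c * real M - 1" unfolding p_def using c by (simp add: of_nat_nat)
    moreover have "(c - \<epsilon>/2) * (real r + real K) \<le> c * (real r + real K)" using eps by (intro mult_right_mono) auto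
    moreover have "(c - \<epsilon>/2) * real q = (c - \<epsilon>/2) * real M + (c - \<epsilon>/2) * (real r + real K)"
      unfolding q_def by (simp only: of_nat_add distrib_left add.assoc)
    moreover have "(c - \<epsilon>/2) * real M = c * real M - \<epsilon> / 2 * real M" by (simp add: algebra_simps)
    ultimately show ?thesis using hM' by linarith
  qed
  have D0: "D \<ge> 0" unfolding D_def using q0 by simp
  show ?thesis
  proof (intro exI allI impI)
    fix n :: nat assume nN: "n \<ge> N"
    define L where "L = ln (real n)"
    have n4q: "real n \<ge> 4 * real q" using nN unfolding N_def by simp
    have ncq: "real n \<ge> 4 * c * real q / \<epsilon>" using nN unfolding N_def by linarith
    have nA: "real n \<ge> exp A" using nN unfolding N_def by linarith
    have npos: "real n > 0" using n4q q0 by simp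
    have "ln (exp A) \<le> ln (real n)" using nA npos by (subst ln_le_cancel_iff) auto
    hence LA: "L \<ge> A" unfolding L_def by simp
    hence LD: "L \<ge> D" and LD2: "L \<ge> 4 * c * D / \<epsilon>" unfolding A_def by auto
    define s where "s = n div q"
    define x where "x = real n / real q - 1"
    have hs: "real s \<ge> x"
    proof -
      have m: "n mod q < q" using q0 by simp
      have "n = q * s + n mod q" unfolding s_def by simp
      hence "real n = real q * real s + real (n mod q)" by (metis of_nat_add of_nat_mult)
      moreover have "real (n mod q) < real q" using m by simp
      ultimately have "real n < real q * (real s + 1)" by (simp add: algebra_simps)
      hence "real n / real q < real s + 1" using q0 by (simp add: divide_less_eq mult.commute)
      thus ?thesis unfolding x_def by simp
    qed
    have x3: "x \<ge> 3" unfolding x_def using n4q q0 by (simp add: field_simps)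
    have x2q: "x \<ge> real n / (2 * real q)" unfolding x_def using n4q q0 by (simp add: field_simps)
    have s1: "s \<ge> 1" using hs x3 by simp
    have lnx1: "ln x \<ge> 1"
    proof -
      have "exp 1 \<le> x" using exp_le x3 by linarith
      hence "ln (exp 1) \<le> ln x" using x3 by (subst ln_le_cancel_iff) auto
      thus ?thesis by simp
    qed
    have lnsx: "ln (real s) \<ge> ln x" using hs x3 by simp
    have "ln (fact s) \<ge> real s * ln (real s) - real s" by (rule ln_fact_lower[OF s1])
    moreover have "real s * (ln (real s) - 1) \<ge> x * (ln x - 1)"
      using hs lnsx lnx1 x3 by (intro mult_mono) auto
    ultimately have f1: "ln (fact s) \<ge> x * (ln x - 1)" by (simp add: algebra_simps)
    have "ln x \<ge> ln (real n / (2 * real q))" using x2q npos q0 x3 by (subst ln_le_cancel_iff) auto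
    also have "ln (real n / (2 * real q)) = L - ln (2 * real q)" unfolding L_def using npos q0 by (simp add: ln_div)
    finally have "ln x - 1 \<ge> L - D" unfolding D_def by simp
    hence "x * (ln x - 1) \<ge> x * (L - D)" using x3 by (intro mult_left_mono) auto
    with f1 have f2: "ln (fact s) \<ge> x * (L - D)" by simp
    have qs: "q * s \<le> n" unfolding s_def by (simp add: mult.commute)
    have cardb: "fact s ^ ((r-1) * p) \<le> card (Q_class r c n)"
      using Q_lower_param[OF r c, of M s n] qs unfolding p_def q_def K_def by simp
    have "ln (real (card (Q_class r c n))) \<ge> ln (real (fact s ^ ((r-1) * p)))"
    proof -
      have cpos: "0 < card (Q_class r c n)" using card_Q_pos[of c r n] c by simp
      have "real (fact s ^ ((r-1) * p)) \<le> real (card (Q_class r c n))" using cardb by (simp only: of_nat_le_iff)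
      moreover have "0 < real (fact s ^ ((r-1) * p))" by simp
      ultimately show ?thesis using cpos by (subst ln_le_cancel_iff) auto
    qed
    also have "ln (real (fact s ^ ((r-1) * p))) = real ((r-1) * p) * ln (fact s)"
      by (simp add: ln_realpow)
    finally have f3: "ln (real (card (Q_class r c n))) \<ge> (real r - 1) * (real p * ln (fact s))"
      using r by (simp add: of_nat_diff mult.assoc)
    have xLD: "x * (L - D) \<ge> 0" using x3 LD by simp
    have "real p * ln (fact s) \<ge> real p * (x * (L - D))" using f2 by (intro mult_left_mono) auto
    moreover have "real p * (x * (L - D)) \<ge> (c - \<epsilon>/2) * real q * (x * (L - D))"
      using hp xLD by (intro mult_right_mono) auto
    moreover have "real q * x = real n - real q" unfolding x_def using q0 by (simp add: field_simps)
    hence "(c - \<epsilon>/2) * real q * (x * (L - D)) = (c - \<epsilon>/2) * ((real n - real q) * (L - D))"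
      by (metis mult.assoc)
    ultimately have f4: "real p * ln (fact s) \<ge> (c - \<epsilon>/2) * ((real n - real q) * (L - D))"
      by linarith
    have f5: "(c - \<epsilon>/2) * ((real n - real q) * (L - D)) \<ge> (c - \<epsilon>) * real n * L"
    proof -
      have L0: "L \<ge> 0" using LD D0 by simp
      have e1: "\<epsilon>/4 * real n * L \<ge> c * real n * D"
      proof -
        have "\<epsilon>/4 * L \<ge> c * D" using LD2 eps by (simp add: field_simps)
        hence "real n * (c * D) \<le> real n * (\<epsilon>/4 * L)" using npos by (intro mult_left_mono) auto
        thus ?thesis by (simp add: mult.commute mult.left_commute)
      qed
      have e2: "\<epsilon>/4 * real n * L \<ge> c * real q * L"
      proof -
        have "\<epsilon>/4 * real n \<ge> c * real q" using ncq eps by (simp add: field_simps)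
        thus ?thesis using L0 by (intro mult_right_mono) auto
      qed
      have e3: "(c - \<epsilon>/2) * (real n * D + real q * L) \<le> c * (real n * D + real q * L)"
        using eps npos q0 L0 D0 by (intro mult_right_mono) auto
      have e4: "(c - \<epsilon>/2) * (real q * D) \<ge> 0" using ce eps q0 D0 by simp
      have "(c - \<epsilon>/2) * ((real n - real q) * (L - D)) =
            (c - \<epsilon>/2) * (real n * L) - (c - \<epsilon>/2) * (real n * D + real q * L) + (c - \<epsilon>/2) * (real q * D)"
        by (simp add: algebra_simps)
      thus ?thesis using e1 e2 e3 e4 by (simp add: algebra_simps)
    qed
    have "(real r - 1) * ((c - \<epsilon>) * real n * L) \<le> (real r - 1) * (real p * ln (fact s))"
      using f4 f5 r by (intro mult_left_mono) auto
    with f3 show "(real r - 1) * (c - \<epsilon>) * real n * ln (real n) \<le> ln (real (card (Q_class r c n)))"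
      unfolding L_def by (simp add: mult.assoc)
  qed
qed




lemma aux_div: "(a::real) \<noteq> 0 \<Longrightarrow> a * (x / (a * y)) = x / y"
  by (cases "y = 0") (simp_all add: field_simps)

lemma final_gen:
  fixes X :: "nat \<Rightarrow> nat" and r :: nat and c :: real
  assumes r: "r \<ge> 2"
    and pos: "\<And>n. X n \<ge> 1"
    and up: "\<And>n. n \<ge> 2 \<Longrightarrow> ln (real (X n)) \<le> (real r - 1) * c * real n * ln (real n) + real n"
    and low: "\<And>\<epsilon>. \<epsilon> > 0 \<Longrightarrow> \<exists>N. \<forall>n\<ge>N. (real r - 1) * (c - \<epsilon>) * real n * ln (real n) \<le> ln (real (X n))"
  shows "\<exists>f :: nat \<Rightarrow> real. f \<longlonglongrightarrow> 0 \<and>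
           (\<forall>\<^sub>F n in sequentially. real (X n) = real n powr ((real r - 1) * (c + f n) * real n))"
proof -
  define Z where "Z n = (real r - 1) * real n * ln (real n)" for n
  define f where "f n = ln (real (X n)) / Z n - c" for n
  have Zpos: "Z n > 0" if "n \<ge> 2" for n
  proof -
    have "ln (real n) > 0" using that by simp
    thus ?thesis unfolding Z_def using r that by simp
  qed
  have ident: "real (X n) = real n powr ((real r - 1) * (c + f n) * real n)" if n: "n \<ge> 2" for n
  proof -
    have lnp: "ln (real n) > 0" using n by simp
    have "(real r - 1) * (c + f n) * real n = (real r - 1) * real n * (ln (real (X n)) / Z n)"
    proof -
      have cf: "c + f n = ln (real (X n)) / Z n" unfolding f_def by simp
      show ?thesis unfolding cf by (simp only: mult_ac)
    qed
    also have "\<dots> = ln (real (X n)) / ln (real n)"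
    proof -
      have a: "(real r - 1) * real n \<noteq> 0" using r n by simp
      show ?thesis unfolding Z_def by (rule aux_div[OF a])
    qed
    finally have e: "(real r - 1) * (c + f n) * real n * ln (real n) = ln (real (X n))"
      using lnp by (simp add: field_simps)
    have Xp: "real (X n) > 0" using pos[of n] by simp
    have "real n powr ((real r - 1) * (c + f n) * real n) = exp ((real r - 1) * (c + f n) * real n * ln (real n))"
      using n by (simp add: powr_def)
    also have "\<dots> = real (X n)" using e Xp by simp
    finally show ?thesis by simp
  qed
  have lim: "f \<longlonglongrightarrow> 0"
  proof (rule LIMSEQ_I)
    fix \<rho> :: real assume rho: "\<rho> > 0"
    obtain N where N: "\<forall>n\<ge>N. (real r - 1) * (c - \<rho>/2) * real n * ln (real n) \<le> ln (real (X n))"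
      using low[of "\<rho>/2"] rho by auto
    define N2 where "N2 = max (max 2 N) (nat \<lceil>exp (2 / ((real r - 1) * \<rho>))\<rceil>)"
    show "\<exists>no. \<forall>n\<ge>no. norm (f n - 0) < \<rho>"
    proof (intro exI allI impI)
      fix n assume nN: "n \<ge> N2"
      have n2: "n \<ge> 2" and nN1: "n \<ge> N" using nN unfolding N2_def by auto
      have nexp: "real n \<ge> exp (2 / ((real r - 1) * \<rho>))" using nN unfolding N2_def by linarith
      have npos: "real n > 0" using n2 by simp
      have "ln (exp (2 / ((real r - 1) * \<rho>))) \<le> ln (real n)" using nexp npos by (subst ln_le_cancel_iff) auto
      hence lnbig: "ln (real n) \<ge> 2 / ((real r - 1) * \<rho>)" by simp
      have Zp: "Z n > 0" by (rule Zpos[OF n2])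
      have r1: "real r - 1 > 0" using r by simp
      have lo0: "(real r - 1) * (c - \<rho>/2) * real n * ln (real n) \<le> ln (real (X n))" using N nN1 by blast
      have "(c - \<rho>/2) * Z n = (real r - 1) * (c - \<rho>/2) * real n * ln (real n)" unfolding Z_def by (simp only: mult_ac)
      hence lo: "(c - \<rho>/2) * Z n \<le> ln (real (X n))" using lo0 by linarith
      hence "c - \<rho>/2 \<le> ln (real (X n)) / Z n" using Zp by (simp add: pos_le_divide_eq)
      hence fl: "f n \<ge> - \<rho>/2" unfolding f_def by simp
      have "ln (real (X n)) \<le> c * Z n + real n" using up[OF n2] unfolding Z_def by (simp add: algebra_simps)
      hence "ln (real (X n)) / Z n \<le> (c * Z n + real n) / Z n" using Zp by (intro divide_right_mono) auto
      also have "\<dots> = c + real n / Z n" using Zp by (simp add: field_simps)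
      also have "real n / Z n = 1 / ((real r - 1) * ln (real n))" unfolding Z_def using npos by simp
      also have "1 / ((real r - 1) * ln (real n)) \<le> \<rho> / 2"
      proof -
        have "(real r - 1) * ln (real n) \<ge> (real r - 1) * (2 / ((real r - 1) * \<rho>))"
          using lnbig r1 by (intro mult_left_mono) auto
        also have "(real r - 1) * (2 / ((real r - 1) * \<rho>)) = 2 / \<rho>" by (rule aux_div) (use r1 in simp)
        finally have h: "(real r - 1) * ln (real n) \<ge> 2 / \<rho>" .
        have "2 / \<rho> > 0" using rho by simp
        note tp = this
        have hp: "(real r - 1) * ln (real n) > 0" using h tp by linarith
        have "1 / ((real r - 1) * ln (real n)) \<le> 1 / (2 / \<rho>)"
          by (rule divide_left_mono[OF h]) (use mult_pos_pos[OF hp tp] in auto)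
        thus ?thesis by simp
      qed
      finally have fu: "f n \<le> \<rho> / 2" unfolding f_def by linarith
      show "norm (f n - 0) < \<rho>" using fl fu rho by simp
    qed
  qed
  show ?thesis
    by (intro exI[of _ f] conjI lim eventually_sequentiallyI[of 2]) (rule ident)
qed



theorem mainTheorem19:
  fixes r :: nat and c :: real
  assumes "r \<ge> 2" and "c \<ge> 1 / (real r - 1)"
  shows "(\<exists>f :: nat \<Rightarrow> real. f \<longlonglongrightarrow> 0 \<and>
           (\<forall>\<^sub>F n in sequentially.
              real (card (Q_class r c n)) = real n powr ((real r - 1) * (c + f n) * real n)))
       \<and> (\<exists>g :: nat \<Rightarrow> real. g \<longlonglongrightarrow> 0 \<and>
           (\<forall>\<^sub>F n in sequentially.
              real (card (S_class r c n)) = real n powr ((real r - 1) * (c + g n) * real n)))"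
proof -
  have r: "r \<ge> 2" using assms(1) .
  have r1: "real r - 1 > 0" using r by simp
  have c0: "c > 0" using assms(2) r1 by (meson order.strict_trans2 zero_less_divide_1_iff)
  have cr: "1 / c \<le> real r - 1"
  proof -
    have "1 \<le> c * (real r - 1)" using assms(2) r1 by (simp add: divide_le_eq)
    thus ?thesis using c0 by (simp add: divide_le_eq mult.commute)
  qed
  have Qpos: "\<And>n. card (Q_class r c n) \<ge> 1" using card_Q_pos c0 by simp
  have Spos: "\<And>n. card (S_class r c n) \<ge> 1" using Qpos card_Q_le_S order_trans by metis
  have lnQS: "ln (real (card (Q_class r c n))) \<le> ln (real (card (S_class r c n)))" for n
  proof -
    have "real (card (Q_class r c n)) \<le> real (card (S_class r c n))" using card_Q_le_S by simp
    moreover have "real (card (Q_class r c n)) > 0" using Qpos[of n] by simp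
    ultimately show ?thesis by (subst ln_le_cancel_iff) auto
  qed
  have A: "\<exists>f :: nat \<Rightarrow> real. f \<longlonglongrightarrow> 0 \<and>
           (\<forall>\<^sub>F n in sequentially.
              real (card (Q_class r c n)) = real n powr ((real r - 1) * (c + f n) * real n))"
  proof (rule final_gen[OF r Qpos])
    fix n :: nat assume "n \<ge> 2"
    thus "ln (real (card (Q_class r c n))) \<le> (real r - 1) * c * real n * ln (real n) + real n"
      using ln_card_S_upper[of n r c] r c0 lnQS[of n] by linarith
  next
    fix \<epsilon> :: real assume "\<epsilon> > 0"
    thus "\<exists>N. \<forall>n\<ge>N. (real r - 1) * (c - \<epsilon>) * real n * ln (real n) \<le> ln (real (card (Q_class r c n)))"
      by (rule ln_card_Q_lower[OF r c0 cr])
  qed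
  have B: "\<exists>g :: nat \<Rightarrow> real. g \<longlonglongrightarrow> 0 \<and>
           (\<forall>\<^sub>F n in sequentially.
              real (card (S_class r c n)) = real n powr ((real r - 1) * (c + g n) * real n))"
  proof (rule final_gen[OF r Spos])
    fix n :: nat assume "n \<ge> 2"
    thus "ln (real (card (S_class r c n))) \<le> (real r - 1) * c * real n * ln (real n) + real n"
      using ln_card_S_upper[of n r c] r c0 by linarith
  next
    fix \<epsilon> :: real assume "\<epsilon> > 0"
    then obtain N where N: "\<forall>n\<ge>N. (real r - 1) * (c - \<epsilon>) * real n * ln (real n) \<le> ln (real (card (Q_class r c n)))"
      using ln_card_Q_lower[OF r c0 cr] by blast
    show "\<exists>N. \<forall>n\<ge>N. (real r - 1) * (c - \<epsilon>) * real n * ln (real n) \<le> ln (real (card (S_class r c n)))"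
      using N lnQS order_trans by blast
  qed
  show ?thesis using A B by blast
qed

end
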